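(* Let $n\ge2$ and let $\mathsf{b}$ be a $C_n$-bivaluation. Then the map $\nu$ from formulas to $B_n$ given by $\nu(\alpha)=(\mathsf{b}(\alpha),\mathsf{b}(\neg\alpha),\mathsf{b}(\alpha^1),\dots,\mathsf{b}(\alpha^{n-1}))$ is a valuation belonging to $\mathcal{F}_{C_n}$, and for every formula $\alpha$, $\mathsf{b}(\alpha)=1$ iff $\nu(\alpha)\in D_n$.
   Context: $\Sigma$ has unary $\neg$ and binary $\wedge,\vee,\to$; formulas over a denumerable set of variables; $\alpha^0=\alpha$, $\alpha^{k+1}=\neg(\alpha^k\wedge\neg\alpha^k)$. A $C_n$-bivaluation is a map $\mathsf{b}$ from formulas to $\{0,1\}$ such that: (B1) $\mathsf{b}(\alpha\wedge\beta)=1$ iff $\mathsf{b}(\alpha)=\mathsf{b}(\beta)=1$; (B2) $\mathsf{b}(\alpha\vee\beta)=1$ iff $\mathsf{b}(\alpha)=1$ or $\mathsf{b}(\beta)=1$; (B3) $\mathsf{b}(\alpha\to\beta)=1$ iff $\mathsf{b}(\alpha)=0$ or $\mathsf{b}(\beta)=1$; (B4) $\mathsf{b}(\alpha)=0$ implies $\mathsf{b}(\neg\alpha)=1$; (B5) $\mathsf{b}(\neg\neg\alpha)=1$ implies $\mathsf{b}(\alpha)=1$; (B6)$_n$ $\mathsf{b}(\alpha^{n-1})=\mathsf{b}(\neg(\alpha^{n-1}))$ iff $\mathsf{b}(\alpha^n)=0$; (B7) $\mathsf{b}(\alpha)=\mathsf{b}(\neg\alpha)$ iff $\mathsf{b}(\neg(\alpha^1))=1$;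 (B8) if $\mathsf{b}(\alpha)\ne\mathsf{b}(\neg\alpha)$ and $\mathsf{b}(\beta)\ne\mathsf{b}(\neg\beta)$ then $\mathsf{b}(\alpha\#\beta)\ne\mathsf{b}(\neg(\alpha\#\beta))$ for $\#\in\{\wedge,\vee,\to\}$. Fix $n\ge2$. $B_n=\{z\in\{0,1\}^{n+1}:(z_1\wedge\dots\wedge z_k)\vee z_{k+1}=1\text{ for all }1\le k\le n\}$, with elements $T_n=(1,0,1,\dots,1)$, $t^n_i$ ($0\le i\le n-2$) having $z_1=z_2=1$ and a single $0$ at coordinate $i+3$, $t^n_{n-1}=(1,\dots,1)$, $F_n=(0,1,\dots,1)$. $D_n=\{z:z_1=1\}$, $Boo_n=\{T_n,F_n\}$, $I_n=B_n\setminus Boo_n$. $\mathcal{A}_{C_n}$ on $B_n$: $\tilde\neg z=\{w\in B_n:w_1=z_2,\ w_2\le z_1\}$; for $\#\in\{\wedge,\vee,\to\}$, $z\tilde\#w=\{u\in Boo_n:u_1=z_1\#w_1\}$ if $z,w\in Boo_n$, else $\{u\in B_n:u_1=z_1\#w_1\}$. A valuation is $\nu$ with $\nu(\neg\alpha)\in\tilde\neg\nu(\alpha)$, $\nu(\alpha\#\beta)\in\nu(\alpha)\tilde\#\nu(\beta)$. $\mathcal{F}_{C_n}$: valuations with $\nu(\alpha)=t^n_0\Rightarrow\nu(\alpha\wedge\neg\alpha)=T_n$, and for $1\le k\le n-1$, $\nu(\alpha)=t^n_k\Rightarrow(\nu(\alpha\wedge\neg\alpha)\in I_n$ and $\nu(\alpha^1)=t^n_{k-1})$.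 *)

theory Defs
  imports Main
begin

datatype fm = FVar nat | FNeg fm | FAnd fm fm | FOr fm fm | FImp fm fm

primrec cpow :: "nat \<Rightarrow> fm \<Rightarrow> fm" where
  "cpow 0 a = a"
| "cpow (Suc k) a = FNeg (FAnd (cpow k a) (FNeg (cpow k a)))"

text \<open>Truth values {0,1} are rendered as bool (1 = True, 0 = False).\<close>
definition bivaluation :: "nat \<Rightarrow> (fm \<Rightarrow> bool) \<Rightarrow> bool" where
  "bivaluation n b \<longleftrightarrow>
     (\<forall>a c. b (FAnd a c) \<longleftrightarrow> b a \<and> b c) \<and>
     (\<forall>a c. b (FOr a c) \<longleftrightarrow> b a \<or> b c) \<and>
     (\<forall>a c. b (FImp a c) \<longleftrightarrow> \<not> b a \<or> b c) \<and>
     (\<forall>a. \<not> b a \<longrightarrow> b (FNeg a)) \<and>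
     (\<forall>a. b (FNeg (FNeg a)) \<longrightarrow> b a) \<and>
     (\<forall>a. (b (cpow (n - 1) a) = b (FNeg (cpow (n - 1) a))) \<longleftrightarrow> \<not> b (cpow n a)) \<and>
     (\<forall>a. (b a = b (FNeg a)) \<longleftrightarrow> b (FNeg (cpow 1 a))) \<and>
     (\<forall>a c. b a \<noteq> b (FNeg a) \<and> b c \<noteq> b (FNeg c) \<longrightarrow>
        b (FAnd a c) \<noteq> b (FNeg (FAnd a c)) \<and>
        b (FOr a c) \<noteq> b (FNeg (FOr a c)) \<and>
        b (FImp a c) \<noteq> b (FNeg (FImp a c)))"

text \<open>Tuples z in {0,1}^(n+1) are bool lists of length n+1;
  coordinate z_i (1-based) is crd z i.\<close>
definition crd :: "bool list \<Rightarrow> nat \<Rightarrow> bool" where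
  "crd z i = z ! (i - 1)"

definition Bn :: "nat \<Rightarrow> bool list set" where
  "Bn n = {z. length z = n + 1 \<and>
     (\<forall>k. 1 \<le> k \<and> k \<le> n \<longrightarrow> (\<forall>i\<in>{1..k}. crd z i) \<or> crd z (k + 1))}"

definition Tn :: "nat \<Rightarrow> bool list" where
  "Tn n = True # False # replicate (n - 1) True"

definition Fn :: "nat \<Rightarrow> bool list" where
  "Fn n = False # replicate n True"

text \<open>t^n_i: for i \<le> n-2, z_1 = z_2 = 1 and a single 0 at coordinate i+3;
  t^n_(n-1) is all ones.\<close>
definition tn :: "nat \<Rightarrow> nat \<Rightarrow> bool list" where
  "tn n i = (if i \<le> n - 2 then (replicate (n + 1) True)[i + 2 := False]
             else replicate (n + 1) True)"

definition Dn :: "nat \<Rightarrow> bool list set" where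
  "Dn n = {z \<in> Bn n. crd z 1}"

definition Boon :: "nat \<Rightarrow> bool list set" where
  "Boon n = {Tn n, Fn n}"

definition In :: "nat \<Rightarrow> bool list set" where
  "In n = Bn n - Boon n"

definition tneg :: "nat \<Rightarrow> bool list \<Rightarrow> bool list set" where
  "tneg n z = {w \<in> Bn n. crd w 1 = crd z 2 \<and> crd w 2 \<le> crd z 1}"

definition tbin :: "nat \<Rightarrow> (bool \<Rightarrow> bool \<Rightarrow> bool) \<Rightarrow> bool list \<Rightarrow> bool list \<Rightarrow> bool list set" where
  "tbin n op z w =
     (if z \<in> Boon n \<and> w \<in> Boon n
      then {u \<in> Boon n. crd u 1 = op (crd z 1) (crd w 1)}
      else {u \<in> Bn n. crd u 1 = op (crd z 1) (crd w 1)})"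

definition valuation :: "nat \<Rightarrow> (fm \<Rightarrow> bool list) \<Rightarrow> bool" where
  "valuation n v \<longleftrightarrow>
     (\<forall>a. v a \<in> Bn n) \<and>
     (\<forall>a. v (FNeg a) \<in> tneg n (v a)) \<and>
     (\<forall>a c. v (FAnd a c) \<in> tbin n (\<and>) (v a) (v c)) \<and>
     (\<forall>a c. v (FOr a c) \<in> tbin n (\<or>) (v a) (v c)) \<and>
     (\<forall>a c. v (FImp a c) \<in> tbin n (\<longrightarrow>) (v a) (v c))"

definition FCn :: "nat \<Rightarrow> (fm \<Rightarrow> bool list) set" where
  "FCn n = {v. valuation n v \<and>
     (\<forall>a. v a = tn n 0 \<longrightarrow> v (FAnd a (FNeg a)) = Tn n) \<and>
     (\<forall>k a. 1 \<le> k \<and> k \<le> n - 1 \<and> v a = tn n k \<longrightarrow>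
        v (FAnd a (FNeg a)) \<in> In n \<and> v (cpow 1 a) = tn n (k - 1))}"

definition bnu :: "nat \<Rightarrow> (fm \<Rightarrow> bool) \<Rightarrow> fm \<Rightarrow> bool list" where
  "bnu n b a = b a # b (FNeg a) # map (\<lambda>k. b (cpow k a)) [1..<n]"

end

theory Submission
  imports Defs
begin

lemma cpow_add: "cpow (j + k) a = cpow j (cpow k a)"
  by (induction j) auto

lemma cpow_Suc1: "cpow (Suc j) a = cpow j (cpow 1 a)"
  using cpow_add[of j 1 a] by simp

lemma bv_and: "b (FAnd x y) = (b x \<and> b y)" if "bivaluation n b"
  using conjunct1[OF bivaluation_def[THEN iffD1, OF that]] by blast
lemma bv_or: "b (FOr x y) = (b x \<or> b y)" if "bivaluation n b"
  using conjunct1[OF conjunct2[OF bivaluation_def[THEN iffD1, OF that]]] by blast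
lemma bv_imp: "b (FImp x y) = (b x \<longrightarrow> b y)" if "bivaluation n b"
  using conjunct1[OF conjunct2[OF conjunct2[OF bivaluation_def[THEN iffD1, OF that]]]] by blast
lemma bv4: "\<not> b x \<Longrightarrow> b (FNeg x)" if "bivaluation n b"
  using conjunct1[OF conjunct2[OF conjunct2[OF conjunct2[OF bivaluation_def[THEN iffD1, OF that]]]]] by blast
lemma bv5: "b (FNeg (FNeg x)) \<Longrightarrow> b x" if "bivaluation n b"
  using conjunct1[OF conjunct2[OF conjunct2[OF conjunct2[OF conjunct2[OF bivaluation_def[THEN iffD1, OF that]]]]]] by blast
lemma bv6: "(b (cpow (n - 1) x) = b (FNeg (cpow (n - 1) x))) \<longleftrightarrow> \<not> b (cpow n x)" if "bivaluation n b"
  using conjunct1[OF conjunct2[OF conjunct2[OF conjunct2[OF conjunct2[OF conjunct2[OF bivaluation_def[THEN iffD1, OF that]]]]]]] by blast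
lemma bv7: "(b x = b (FNeg x)) \<longleftrightarrow> b (FNeg (cpow 1 x))" if "bivaluation n b"
  using conjunct1[OF conjunct2[OF conjunct2[OF conjunct2[OF conjunct2[OF conjunct2[OF conjunct2[OF bivaluation_def[THEN iffD1, OF that]]]]]]]] by blast
lemma bv8: "b x \<noteq> b (FNeg x) \<Longrightarrow> b y \<noteq> b (FNeg y) \<Longrightarrow>
        b (FAnd x y) \<noteq> b (FNeg (FAnd x y)) \<and>
        b (FOr x y) \<noteq> b (FNeg (FOr x y)) \<and>
        b (FImp x y) \<noteq> b (FNeg (FImp x y))" if "bivaluation n b"
  using conjunct2[OF conjunct2[OF conjunct2[OF conjunct2[OF conjunct2[OF conjunct2[OF conjunct2[OF bivaluation_def[THEN iffD1, OF that]]]]]]]] by blast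

lemma cl_step:
  assumes "bivaluation n b" "b x \<noteq> b (FNeg x)"
  shows "b (cpow 1 x) \<and> \<not> b (FNeg (cpow 1 x))"
  using bv7[OF assms(1), of x] bv4[OF assms(1), of "cpow 1 x"] assms(2) by auto

lemma cl_prop:
  assumes bv: "bivaluation n b" and c: "b (cpow j a) \<noteq> b (FNeg (cpow j a))"
  shows "j < m \<Longrightarrow> b (cpow m a) \<and> \<not> b (FNeg (cpow m a))"
proof (induction m)
  case 0 then show ?case by simp
next
  case (Suc m)
  have "b (cpow m a) \<noteq> b (FNeg (cpow m a))"
  proof (cases "j = m")
    case True then show ?thesis using c by simp
  next
    case False then show ?thesis using Suc by auto
  qed
  from cl_step[OF bv this] show ?case by simp
qed

lemma len_bnu: "length (bnu n b a) = n + 1" if "n \<ge> 1"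
  using that by (simp add: bnu_def)

lemma bnu_nth0: "bnu n b a ! 0 = b a" by (simp add: bnu_def)
lemma bnu_nth1: "bnu n b a ! 1 = b (FNeg a)" by (simp add: bnu_def)
lemma bnu_nth1': "bnu n b a ! Suc 0 = b (FNeg a)" by (simp add: bnu_def)
lemma crd_bnu1[simp]: "crd (bnu n b a) (Suc 0) = b a" by (simp add: bnu_def crd_def)
lemma crd_bnu1'[simp]: "crd (bnu n b a) 1 = b a" by (simp add: bnu_def crd_def)
lemma crd_bnu2[simp]: "crd (bnu n b a) 2 = b (FNeg a)" by (simp add: bnu_def crd_def)
lemma bnu_nth: "2 \<le> i \<Longrightarrow> i \<le> n \<Longrightarrow> bnu n b a ! i = b (cpow (i - 1) a)"
proof -
  assume "2 \<le> i" "i \<le> n"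
  then obtain j where j: "i = Suc (Suc j)" by (metis add_2_eq_Suc le_Suc_ex)
  with \<open>i \<le> n\<close> have "j < n - 1" by simp
  with j show ?thesis by (simp add: bnu_def nth_upt)
qed

lemma crd_nth: "crd z i = z ! (i - 1)" by (simp add: crd_def)

lemma bnu_Bn:
  assumes n: "n \<ge> 2" and bv: "bivaluation n b"
  shows "bnu n b a \<in> Bn n"
proof -
  let ?z = "bnu n b a"
  have key: "?z ! i" if k: "1 \<le> k" "k \<le> n" "\<not> ?z ! k" "i < k" for k i
  proof (cases "k = 1")
    case True
    then have "\<not> b (FNeg a)" using k bnu_nth1 by metis
    then have "b a" using bv4[OF bv] by blast
    then show ?thesis using True k bnu_nth0 by (metis less_one)
  next
    case False
    then have k2: "k \<ge> 2" using k by simp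
    have nk: "\<not> b (cpow (k - 1) a)" using k k2 bnu_nth by metis
    show ?thesis
    proof (rule ccontr)
      assume ni: "\<not> ?z ! i"
      have "\<exists>j. j < k - 1 \<and> b (cpow j a) \<noteq> b (FNeg (cpow j a))"
      proof (cases "i \<le> 1")
        case True
        have "b a \<noteq> b (FNeg a)"
        proof (cases "i = 0")
          case True then show ?thesis using ni bnu_nth0 bv4[OF bv] by metis
        next
          case False then have "i = 1" using \<open>i \<le> 1\<close> by simp
          then show ?thesis using ni bnu_nth1 bv4[OF bv] by metis
        qed
        then show ?thesis using k2 by (intro exI[of _ 0]) auto
      next
        case False
        then have "\<not> b (cpow (i - 1) a)" using ni bnu_nth k by (metis not_le less_imp_le_nat
              Suc_leI order.trans numeral_2_eq_2 Suc_1 le_less)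
        then have "b (cpow (i - 1) a) \<noteq> b (FNeg (cpow (i - 1) a))" using bv4[OF bv] by blast
        then show ?thesis using False k by (intro exI[of _ "i - 1"]) auto
      qed
      then obtain j where "j < k - 1" "b (cpow j a) \<noteq> b (FNeg (cpow j a))" by blast
      from cl_prop[OF bv this(2) this(1)] nk show False by simp
    qed
  qed
  show ?thesis
    unfolding Bn_def
  proof (intro CollectI conjI allI impI)
    show "length ?z = n + 1" using n by (simp add: len_bnu)
  next
    fix k assume k: "1 \<le> k \<and> k \<le> n"
    show "(\<forall>i\<in>{1..k}. crd ?z i) \<or> crd ?z (k + 1)"
    proof (cases "?z ! k")
      case True then show ?thesis by (simp add: crd_nth)
    next
      case False
      have "\<forall>i\<in>{1..k}. crd ?z i"
      proof
        fix i assume "i \<in> {1..k}"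
        then have "i - 1 < k" by auto
        then show "crd ?z i" using key[of k "i - 1"] k False by (simp add: crd_nth)
      qed
      then show ?thesis by blast
    qed
  qed
qed

lemma Tn_nth: "i \<le> n \<Longrightarrow> Tn n ! i = (i \<noteq> 1)"
  by (cases i) (auto simp: Tn_def nth_Cons split: nat.splits)
lemma Fn_nth: "i \<le> n \<Longrightarrow> Fn n ! i = (i \<noteq> 0)"
  by (cases i) (auto simp: Fn_def nth_Cons split: nat.splits)
lemma len_Tn: "n \<ge> 1 \<Longrightarrow> length (Tn n) = n + 1" by (simp add: Tn_def)
lemma len_Fn: "length (Fn n) = n + 1" by (simp add: Fn_def)

lemma tn_nth: "i \<le> n \<Longrightarrow> tn n k ! i = (if k \<le> n - 2 then i \<noteq> k + 2 else True)"
  by (cases i) (auto simp: tn_def nth_list_update nth_Cons split: nat.splits)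
lemma len_tn: "length (tn n k) = n + 1" by (simp add: tn_def)

lemma bnu_Boon:
  assumes n: "n \<ge> 2" and bv: "bivaluation n b"
  shows "bnu n b a \<in> Boon n \<longleftrightarrow> b a \<noteq> b (FNeg a)"
proof
  assume "bnu n b a \<in> Boon n"
  then show "b a \<noteq> b (FNeg a)"
    using n bnu_nth0[of n b a] bnu_nth1[of n b a] Tn_nth[of 0 n] Tn_nth[of 1 n]
      Fn_nth[of 0 n] Fn_nth[of 1 n]
    by (auto simp: Boon_def)
next
  assume c: "b a \<noteq> b (FNeg a)"
  have hi: "bnu n b a ! i" if "2 \<le> i" "i \<le> n" for i
    using cl_prop[OF bv, of 0 a "i - 1"] c that bnu_nth by simp
  show "bnu n b a \<in> Boon n"
  proof (cases "b a")
    case True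
    have "bnu n b a = Tn n"
    proof (rule nth_equalityI)
      show "length (bnu n b a) = length (Tn n)" using n by (simp add: len_bnu len_Tn)
      fix i assume "i < length (bnu n b a)"
      then have i: "i \<le> n" using n by (simp add: len_bnu)
      show "bnu n b a ! i = Tn n ! i"
        using i hi[of i] Tn_nth[OF i] True c bnu_nth0[of n b a] bnu_nth1[of n b a]
        by (cases "i = 0"; cases "i = 1") auto
    qed
    then show ?thesis by (simp add: Boon_def)
  next
    case False
    have "bnu n b a = Fn n"
    proof (rule nth_equalityI)
      show "length (bnu n b a) = length (Fn n)" using n by (simp add: len_bnu len_Fn)
      fix i assume "i < length (bnu n b a)"
      then have i: "i \<le> n" using n by (simp add: len_bnu)
      show "bnu n b a ! i = Fn n ! i"
        using i hi[of i] Fn_nth[OF i] False c bnu_nth0[of n b a] bnu_nth1[of n b a]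
        by (cases "i = 0"; cases "i = 1") auto
    qed
    then show ?thesis by (simp add: Boon_def)
  qed
qed

lemma bnu_tbin:
  assumes n: "n \<ge> 2" and bv: "bivaluation n b"
    and op: "b (C x y) = f (b x) (b y)"
    and cl: "b x \<noteq> b (FNeg x) \<Longrightarrow> b y \<noteq> b (FNeg y) \<Longrightarrow> b (C x y) \<noteq> b (FNeg (C x y))"
  shows "bnu n b (C x y) \<in> tbin n f (bnu n b x) (bnu n b y)"
proof -
  have c1: "crd (bnu n b z) 1 = b z" for z by (simp add: crd_nth bnu_nth0)
  show ?thesis
    using bnu_Boon[OF n bv] bnu_Bn[OF n bv] cl op
    unfolding tbin_def by (auto simp: c1)
qed

theorem mainTheorem12:
  fixes n :: nat and b :: "fm \<Rightarrow> bool"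
  assumes "n \<ge> 2" and "bivaluation n b"
  shows "valuation n (bnu n b) \<and> bnu n b \<in> FCn n \<and>
         (\<forall>a. b a \<longleftrightarrow> bnu n b a \<in> Dn n)"
proof -
  note n = assms(1) and bv = assms(2)
  have c1: "crd (bnu n b z) 1 = b z" for z by (simp add: crd_nth bnu_nth0)
  have c2: "crd (bnu n b z) 2 = b (FNeg z)" for z by simp
  have val: "valuation n (bnu n b)"
    unfolding valuation_def
  proof (intro conjI allI)
    fix a show "bnu n b a \<in> Bn n" by (rule bnu_Bn[OF n bv])
  next
    fix a show "bnu n b (FNeg a) \<in> tneg n (bnu n b a)"
      unfolding tneg_def using bnu_Bn[OF n bv] bv5[OF bv, of a] by (auto simp: c1 c2)
  next
    fix a c show "bnu n b (FAnd a c) \<in> tbin n (\<and>) (bnu n b a) (bnu n b c)"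
      by (rule bnu_tbin[OF n bv]) (use bv_and[OF bv] bv8[OF bv] in auto)
  next
    fix a c show "bnu n b (FOr a c) \<in> tbin n (\<or>) (bnu n b a) (bnu n b c)"
      by (rule bnu_tbin[OF n bv]) (use bv_or[OF bv] bv8[OF bv] in auto)
  next
    fix a c show "bnu n b (FImp a c) \<in> tbin n (\<longrightarrow>) (bnu n b a) (bnu n b c)"
      by (rule bnu_tbin[OF n bv]) (use bv_imp[OF bv] bv8[OF bv] in auto)
  qed
  have f0: "bnu n b (FAnd a (FNeg a)) = Tn n" if h: "bnu n b a = tn n 0" for a
  proof -
    have "b a" using bnu_nth0[of n b a] tn_nth[of 0 n 0] h by simp
    moreover have "b (FNeg a)" using bnu_nth1[of n b a] tn_nth[of 1 n 0] h n by simp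
    moreover have "\<not> b (cpow 1 a)" using bnu_nth[of 2 n b a] tn_nth[of 2 n 0] h n by simp
    ultimately have cl: "b (FAnd a (FNeg a)) \<and> \<not> b (FNeg (FAnd a (FNeg a)))"
      using bv_and[OF bv] by simp
    then have "bnu n b (FAnd a (FNeg a)) \<in> Boon n" using bnu_Boon[OF n bv, of "FAnd a (FNeg a)"] by simp
    moreover have "bnu n b (FAnd a (FNeg a)) \<noteq> Fn n"
    proof
      assume "bnu n b (FAnd a (FNeg a)) = Fn n"
      then have "bnu n b (FAnd a (FNeg a)) ! 0 = Fn n ! 0" by simp
      then show False using cl by (simp add: bnu_nth0 Fn_def)
    qed
    ultimately show ?thesis by (auto simp: Boon_def)
  qed
  have fk: "bnu n b (FAnd a (FNeg a)) \<in> In n \<and> bnu n b (cpow 1 a) = tn n (k - 1)"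
    if k: "1 \<le> k" "k \<le> n - 1" and h: "bnu n b a = tn n k" for k a
  proof -
    have ba: "b a" using bnu_nth0[of n b a] tn_nth[of 0 n k] h by (auto split: if_splits)
    have bna: "b (FNeg a)" using bnu_nth1[of n b a] tn_nth[of 1 n k] h n by (auto split: if_splits)
    have b1: "b (cpow 1 a)" using bnu_nth[of 2 n b a] tn_nth[of 2 n k] h n k by (auto split: if_splits)
    have bn1: "b (FNeg (cpow 1 a))" using bv7[OF bv, of a] ba bna by simp
    have zi: "b (cpow j a) = (if k \<le> n - 2 then j \<noteq> k + 1 else True)"
      if "1 \<le> j" "j \<le> n - 1" for j
      using bnu_nth[of "j+1" n b a] tn_nth[of "j+1" n k] h that n by auto
    have part1: "bnu n b (FAnd a (FNeg a)) \<in> In n"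
    proof -
      have "b (FAnd a (FNeg a)) = b (FNeg (FAnd a (FNeg a)))"
        using bv_and[OF bv] ba bna b1 by simp
      then show ?thesis using bnu_Boon[OF n bv] bnu_Bn[OF n bv] by (auto simp: In_def)
    qed
    have part2: "bnu n b (cpow 1 a) = tn n (k - 1)"
    proof (rule nth_equalityI)
      show "length (bnu n b (cpow 1 a)) = length (tn n (k - 1))"
        using n by (simp add: len_bnu len_tn)
      fix i assume "i < length (bnu n b (cpow 1 a))"
      then have i: "i \<le> n" using n by (simp add: len_bnu)
      have tk: "tn n (k - 1) ! i = (i \<noteq> k + 1)" using tn_nth[OF i, of "k-1"] k by auto
      show "bnu n b (cpow 1 a) ! i = tn n (k - 1) ! i"
      proof (cases "i \<le> 1")
        case i1: True
        show ?thesis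
        proof (cases "i = 0")
          case True
          then show ?thesis using tk bnu_nth0[of n b "cpow 1 a"] b1 by simp
        next
          case False
          then have "i = Suc 0" using i1 by simp
          moreover have "bnu n b (cpow 1 a) ! Suc 0 = b (FNeg (cpow 1 a))" by (rule bnu_nth1')
          ultimately show ?thesis using tk bn1 k by simp
        qed
      next
        case False
        have e: "bnu n b (cpow 1 a) ! i = b (cpow i a)"
          using bnu_nth[of i n b "cpow 1 a"] False i cpow_add[of "i - 1" 1 a] by simp
        show ?thesis
        proof (cases "i < n")
          case True
          then show ?thesis using e tk zi[of i] False by auto
        next
          case False
          then have iN: "i = n" using i by simp
          show ?thesis
          proof (cases "k \<le> n - 2")
            case True
            have "\<not> b (cpow (k+1) a)" using zi[of "k+1"] True k n by simp
            then have "b (cpow (k+1) a) \<noteq> b (FNeg (cpow (k+1) a))" using bv4[OF bv] by blast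
            from cl_prop[OF bv this, of n] True n have "b (cpow n a)" by simp
            then show ?thesis using e tk iN True n by simp
          next
            case False
            then have kk: "k = n - 1" using k by simp
            have negs: "j \<le> n - 1 \<Longrightarrow> b (FNeg (cpow j a))" for j
            proof (induction j)
              case 0 then show ?case using bna by simp
            next
              case (Suc j)
              have "b (cpow j a)" using ba zi[of j] False Suc.prems by (cases "j = 0") auto
              then have "b (cpow j a) = b (FNeg (cpow j a))" using Suc by simp
              then have "b (FNeg (cpow 1 (cpow j a)))" using bv7[OF bv] by blast
              then show ?case by simp
            qed
            have "b (cpow (n - 1) a)" using ba zi[of "n - 1"] False n by (cases "n - 1 = 0") auto
            then have "\<not> b (cpow n a)" using negs[of "n - 1"] bv6[OF bv, of a] by simp
            then show ?thesis using e tk iN kk n by simp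
          qed
        qed
      qed
    qed
    show ?thesis using part1 part2 by blast
  qed
  have fc: "bnu n b \<in> FCn n"
    unfolding FCn_def using val f0 fk by blast
  have dn: "\<forall>a. b a \<longleftrightarrow> bnu n b a \<in> Dn n"
    using bnu_Bn[OF n bv] by (auto simp: Dn_def c1)
  show ?thesis using val fc dn by blast
qed

end
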